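(* Let $f:E\to\mathbb{R}$ be $L$-smooth (not necessarily convex) and suppose $f$ attains its minimum at a point $x_*$. Let Algorithm AGMsDR (either option) be run from $x^0$ producing $y^0,\dots,y^N$ and $x^0,\dots,x^{N+1}$, with $N\ge 1$. Then $$\min_{k=0,\dots,N}\|\nabla f(y^k)\|_*^2\le\frac{2L\,(f(x^0)-f(x_* ))}{N}.$$
   Context: $E$ is a finite-dimensional real vector space with a norm $\|\cdot\|$; $E^*$ is its dual, $\langle g,x\rangle$ denotes the value of $g\in E^*$ at $x\in E$, and $\|g\|_*=\max\{\langle g,x\rangle:\|x\|\le 1\}$. For $g\in E^*$, $g^{\#}$ denotes a (fixed) element $s\in E$ with $\|s\|\le 1$ and $\langle g,s\rangle=\|g\|_*$. A prox-function $d:E\to\mathbb{R}$ is continuously differentiable, convex, $1$-strongly convex with respect to $\|\cdot\|$ (i.e. $d(y)-d(x)-\langle\nabla d(x),y-x\rangle\ge\frac12\|y-x\|^2$ for all $x,y\in E$) and satisfies $\min_E d=0$; its Bregman divergence is $V(x,z)=d(x)-d(z)-\langle\nabla d(z),x-z\rangle$. A function $f:E\to\mathbb{R}$ is $L$-smooth ($L>0$) if it is continuously differentiable and $\|\nabla f(x)-\nabla f(y)\|_*\le L\|x-y\|$ for all $x,y\in E$. Algorithm AGMsDR (input $x^0\in E$, and $L$ for Option (a)): set $A_0=0$, $v^0=x^0$, $\psi_0(x)=V(x,x^0)$. For $k=0,1,2,\dots$: 1. Choose $\beta_k\in\arg\min_{\beta\in[0,1]} f(v^k+\beta(x^k-v^k))$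 (a global minimizer over the interval) and set $y^k=v^k+\beta_k(x^k-v^k)$. 2. Option (a): $x^{k+1}\in\arg\min_{x\in E}\{f(y^k)+\langle\nabla f(y^k),x-y^k\rangle+\frac L2\|x-y^k\|^2\}$, and $a_{k+1}>0$ solves $\frac{a_{k+1}^2}{A_k+a_{k+1}}=\frac1L$. Option (b): $h_{k+1}\in\arg\min_{h\ge0} f(y^k-h(\nabla f(y^k))^{\#})$, $x^{k+1}=y^k-h_{k+1}(\nabla f(y^k))^{\#}$, and $a_{k+1}$ is the largest solution of $f(y^k)-\frac{a_{k+1}^2}{2(A_k+a_{k+1})}\|\nabla f(y^k)\|_*^2=f(x^{k+1})$. 3. $A_{k+1}=A_k+a_{k+1}$; $\psi_{k+1}(x)=\psi_k(x)+a_{k+1}\{f(y^k)+\langle\nabla f(y^k),x-y^k\rangle\}$; $v^{k+1}=\arg\min_{x\in E}\psi_{k+1}(x)$. It is assumed that all the minima in the algorithm are attained, and that $\nabla f(y^k)\neq 0$ for all iterations considered (otherwise $y^k$ is a stationary point and the method stops). *)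

theory Defs
  imports "HOL-Analysis.Analysis"
begin

text \<open>E is modelled by a finite-dimensional real type 'a::euclidean_space carrying an
  arbitrary (not necessarily Euclidean) norm nrm. The dual space E* is identified with 'a
  via the inner product: g represents the functional x \<mapsto> g \<bullet> x.
  Gradients are the corresponding Riesz representatives.\<close>

definition is_norm :: "('a::real_vector \<Rightarrow> real) \<Rightarrow> bool" where
  "is_norm nrm \<longleftrightarrow>
     (\<forall>x. 0 \<le> nrm x) \<and> (\<forall>x. nrm x = 0 \<longleftrightarrow> x = 0) \<and>
     (\<forall>c x. nrm (c *\<^sub>R x) = \<bar>c\<bar> * nrm x) \<and>
     (\<forall>x y. nrm (x + y) \<le> nrm x + nrm y)"

definition dual_norm :: "('a::real_inner \<Rightarrow> real) \<Rightarrow> 'a \<Rightarrow> real" where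
  "dual_norm nrm g = Sup ((\<lambda>x. g \<bullet> x) ` {x. nrm x \<le> 1})"

definition L_smooth :: "('a::real_inner \<Rightarrow> real) \<Rightarrow> ('a \<Rightarrow> real) \<Rightarrow> ('a \<Rightarrow> 'a) \<Rightarrow> real \<Rightarrow> bool" where
  "L_smooth nrm f gf L \<longleftrightarrow> L > 0 \<and> (\<forall>x. GDERIV f x :> gf x) \<and> continuous_on UNIV gf \<and>
     (\<forall>x y. dual_norm nrm (gf x - gf y) \<le> L * nrm (x - y))"

definition prox_function :: "('a::real_inner \<Rightarrow> real) \<Rightarrow> ('a \<Rightarrow> real) \<Rightarrow> ('a \<Rightarrow> 'a) \<Rightarrow> bool" where
  "prox_function nrm d gd \<longleftrightarrow> (\<forall>x. GDERIV d x :> gd x) \<and> continuous_on UNIV gd \<and>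
     convex_on UNIV d \<and>
     (\<forall>x y. d y - d x - gd x \<bullet> (y - x) \<ge> (1/2) * (nrm (y - x))\<^sup>2) \<and>
     (\<exists>x. d x = 0) \<and> (\<forall>x. d x \<ge> 0)"

definition bregman :: "('a::real_inner \<Rightarrow> real) \<Rightarrow> ('a \<Rightarrow> 'a) \<Rightarrow> 'a \<Rightarrow> 'a \<Rightarrow> real" where
  "bregman d gd x z = d x - d z - gd z \<bullet> (x - z)"

definition psi :: "('a::real_inner \<Rightarrow> real) \<Rightarrow> ('a \<Rightarrow> 'a) \<Rightarrow> ('a \<Rightarrow> real) \<Rightarrow> ('a \<Rightarrow> 'a)
    \<Rightarrow> 'a \<Rightarrow> (nat \<Rightarrow> real) \<Rightarrow> (nat \<Rightarrow> 'a) \<Rightarrow> nat \<Rightarrow> 'a \<Rightarrow> real" where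
  "psi d gd f gf x0 a y k x =
     bregman d gd x x0 + (\<Sum>i<k. a (Suc i) * (f (y i) + gf (y i) \<bullet> (x - y i)))"

definition AGMsDR_common where
  "AGMsDR_common f gf d gd N x0 x y v A a \<beta> \<longleftrightarrow>
     A 0 = 0 \<and> v 0 = x0 \<and> x 0 = x0 \<and>
     (\<forall>k\<le>N.
        \<beta> k \<in> {0..1} \<and>
        (\<forall>b\<in>{0..1::real}. f (v k + \<beta> k *\<^sub>R (x k - v k)) \<le> f (v k + b *\<^sub>R (x k - v k))) \<and>
        y k = v k + \<beta> k *\<^sub>R (x k - v k) \<and>
        A (Suc k) = A k + a (Suc k) \<and>
        (\<forall>z. psi d gd f gf x0 a y (Suc k) (v (Suc k)) \<le> psi d gd f gf x0 a y (Suc k) z))"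

definition AGMsDR_option_a where
  "AGMsDR_option_a nrm f gf L N x y A a \<longleftrightarrow>
     (\<forall>k\<le>N.
        (\<forall>z. f (y k) + gf (y k) \<bullet> (x (Suc k) - y k) + L / 2 * (nrm (x (Suc k) - y k))\<^sup>2
             \<le> f (y k) + gf (y k) \<bullet> (z - y k) + L / 2 * (nrm (z - y k))\<^sup>2) \<and>
        a (Suc k) > 0 \<and> (a (Suc k))\<^sup>2 / (A k + a (Suc k)) = 1 / L)"

definition AGMsDR_option_b where
  "AGMsDR_option_b nrm sharp f gf N x y A a h \<longleftrightarrow>
     (\<forall>k\<le>N.
        h (Suc k) \<ge> 0 \<and>
        (\<forall>t\<ge>0. f (y k - h (Suc k) *\<^sub>R sharp (gf (y k))) \<le> f (y k - t *\<^sub>R sharp (gf (y k)))) \<and>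
        x (Suc k) = y k - h (Suc k) *\<^sub>R sharp (gf (y k)) \<and>
        A k + a (Suc k) \<noteq> 0 \<and>
        f (y k) - (a (Suc k))\<^sup>2 / (2 * (A k + a (Suc k))) * (dual_norm nrm (gf (y k)))\<^sup>2
          = f (x (Suc k)) \<and>
        (\<forall>a'. A k + a' \<noteq> 0 \<and>
              f (y k) - a'\<^sup>2 / (2 * (A k + a')) * (dual_norm nrm (gf (y k)))\<^sup>2 = f (x (Suc k))
              \<longrightarrow> a' \<le> a (Suc k)))"

end

theory Submission imports Defs begin

lemma nrm_props:
  assumes "is_norm nrm"
  shows "nrm (-x) = nrm x" "nrm 0 = 0" "nrm (c *\<^sub>R x) = \<bar>c\<bar> * nrm x" "nrm (x+y) \<le> nrm x + nrm y" "0 \<le> nrm x"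
proof -
  have a: "\<And>c x. nrm (c *\<^sub>R x) = \<bar>c\<bar> * nrm x" using assms unfolding is_norm_def by blast
  show "nrm (c *\<^sub>R x) = \<bar>c\<bar> * nrm x" by (rule a)
  show "nrm (x+y) \<le> nrm x + nrm y" "0 \<le> nrm x" "nrm 0 = 0"
    using assms unfolding is_norm_def by auto
  have "nrm ((-1) *\<^sub>R x) = nrm x" using a[of "-1" x] by simp
  then show "nrm (-x) = nrm x" by simp
qed

lemma nrm_sum:
  assumes "is_norm nrm" "finite S"
  shows "nrm (\<Sum>i\<in>S. g i) \<le> (\<Sum>i\<in>S. nrm (g i))"
  using assms(2)
proof (induction S rule: finite_induct)
  case empty then show ?case using nrm_props[OF assms(1)] by simp
next
  case (insert i S)
  then show ?case using nrm_props(4)[OF assms(1), of "g i" "sum g S"] by simp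
qed

lemma nrm_upper:
  fixes nrm :: "'a::euclidean_space \<Rightarrow> real"
  assumes "is_norm nrm"
  shows "nrm x \<le> (\<Sum>b\<in>Basis. nrm b) * norm x"
proof -
  have "nrm x = nrm (\<Sum>b\<in>Basis. (x \<bullet> b) *\<^sub>R b)" by (simp add: euclidean_representation)
  also have "\<dots> \<le> (\<Sum>b\<in>Basis. nrm ((x \<bullet> b) *\<^sub>R b))" by (rule nrm_sum[OF assms]) simp
  also have "\<dots> = (\<Sum>b\<in>Basis. \<bar>x \<bullet> b\<bar> * nrm b)" using nrm_props(3)[OF assms] by simp
  also have "\<dots> \<le> (\<Sum>b\<in>Basis. norm x * nrm b)"
    by (rule sum_mono, rule mult_right_mono) (auto simp: Basis_le_norm nrm_props(5)[OF assms])
  also have "\<dots> = (\<Sum>b\<in>Basis. nrm b) * norm x" by (simp add: sum_distrib_left mult.commute)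
  finally show ?thesis .
qed

lemma nrm_cont:
  fixes nrm :: "'a::euclidean_space \<Rightarrow> real"
  assumes "is_norm nrm"
  shows "continuous_on S nrm"
proof -
  let ?C = "\<Sum>b\<in>Basis. nrm (b::'a)"
  have C0: "0 \<le> ?C" by (rule sum_nonneg) (use nrm_props(5)[OF assms] in auto)
  have "?C-lipschitz_on S nrm"
    unfolding lipschitz_on_def
  proof (intro conjI C0 ballI)
    fix u w assume "u \<in> S" "w \<in> S"
    have 1: "nrm u \<le> nrm w + nrm (u - w)" using nrm_props(4)[OF assms, of w "u - w"] by simp
    have 2: "nrm w \<le> nrm u + nrm (w - u)" using nrm_props(4)[OF assms, of u "w - u"] by simp
    have 3: "nrm (w - u) = nrm (u - w)" using nrm_props(1)[OF assms, of "u - w"] by simp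
    have "\<bar>nrm u - nrm w\<bar> \<le> nrm (u - w)" using 1 2 3 by linarith
    also have "\<dots> \<le> ?C * norm (u - w)" by (rule nrm_upper[OF assms])
    finally show "dist (nrm u) (nrm w) \<le> ?C * dist u w" by (simp add: dist_norm dist_real_def)
  qed
  then show ?thesis by (rule lipschitz_on_continuous_on)
qed

lemma nrm_lower:
  fixes nrm :: "'a::euclidean_space \<Rightarrow> real"
  assumes "is_norm nrm"
  shows "\<exists>c>0. \<forall>x. c * norm x \<le> nrm x"
proof -
  obtain b :: 'a where b: "b \<in> Basis" using nonempty_Basis by blast
  have "b \<in> sphere 0 1" using b by (simp add: norm_Basis)
  then have ne: "sphere (0::'a) 1 \<noteq> {}" by blast
  obtain m where m: "m \<in> sphere 0 1" "\<forall>z\<in>sphere 0 1. nrm m \<le> nrm z"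
    using continuous_attains_inf[OF compact_sphere ne nrm_cont[OF assms]] by blast
  have "m \<noteq> 0" using m(1) by auto
  then have c: "nrm m > 0" using assms unfolding is_norm_def by (metis less_eq_real_def)
  show ?thesis
  proof (intro exI[of _ "nrm m"] conjI c allI)
    fix z :: 'a
    show "nrm m * norm z \<le> nrm z"
    proof (cases "z = 0")
      case True then show ?thesis using nrm_props[OF assms] by simp
    next
      case False
      then have "(1 / norm z) *\<^sub>R z \<in> sphere 0 1" by (auto simp: sphere_def)
      then have "nrm m \<le> nrm ((1 / norm z) *\<^sub>R z)" using m(2) by blast
      also have "\<dots> = nrm z / norm z" using nrm_props(3)[OF assms] by simp
      finally show ?thesis using False by (simp add: field_simps)
    qed
  qed
qed

lemma dual_bdd:
  fixes nrm :: "'a::euclidean_space \<Rightarrow> real"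
  assumes "is_norm nrm"
  shows "bdd_above ((\<lambda>x. g \<bullet> x) ` {x. nrm x \<le> 1})"
proof -
  obtain c where c: "c > 0" "\<forall>x. c * norm x \<le> nrm x" using nrm_lower[OF assms] by blast
  show ?thesis unfolding bdd_above_def
  proof (intro exI[of _ "norm g / c"] ballI)
    fix t assume "t \<in> (\<lambda>x. g \<bullet> x) ` {x. nrm x \<le> 1}"
    then obtain z where z: "nrm z \<le> 1" "t = g \<bullet> z" by auto
    have "c * norm z \<le> 1" using c(2) z(1) by (meson order_trans)
    then have "norm z \<le> 1 / c" using c(1) by (simp add: field_simps)
    have "t \<le> norm g * norm z" using z(2) norm_cauchy_schwarz by auto
    also have "\<dots> \<le> norm g * (1 / c)" by (rule mult_left_mono) (use \<open>norm z \<le> 1 / c\<close> in auto)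
    finally show "t \<le> norm g / c" by simp
  qed
qed

lemma dual_ineq:
  fixes nrm :: "'a::euclidean_space \<Rightarrow> real"
  assumes "is_norm nrm"
  shows "g \<bullet> z \<le> dual_norm nrm g * nrm z"
proof (cases "z = 0")
  case True
  have "g \<bullet> 0 \<le> dual_norm nrm g" unfolding dual_norm_def
    by (rule cSup_upper[OF _ dual_bdd[OF assms]]) (use nrm_props(2)[OF assms] in \<open>intro image_eqI[of _ _ 0], auto\<close>)
  then show ?thesis using True nrm_props(2)[OF assms] by simp
next
  case False
  then have p: "nrm z > 0" using assms unfolding is_norm_def by (metis less_eq_real_def)
  have "nrm ((1 / nrm z) *\<^sub>R z) = 1" using nrm_props(3)[OF assms] p by simp
  then have mem: "(1 / nrm z) *\<^sub>R z \<in> {x. nrm x \<le> 1}" by simp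
  have "g \<bullet> ((1 / nrm z) *\<^sub>R z) \<le> dual_norm nrm g" unfolding dual_norm_def
    by (rule cSup_upper[OF imageI[OF mem] dual_bdd[OF assms]])
  then have "(g \<bullet> z) / nrm z \<le> dual_norm nrm g" by simp
  then show ?thesis using p by (simp add: field_simps)
qed

lemma dual_nonneg:
  fixes nrm :: "'a::euclidean_space \<Rightarrow> real"
  assumes "is_norm nrm"
  shows "0 \<le> dual_norm nrm g"
  unfolding dual_norm_def
proof (rule cSup_upper2[OF _ _ dual_bdd[OF assms]])
  show "g \<bullet> 0 \<in> (\<lambda>x. g \<bullet> x) ` {x. nrm x \<le> 1}" using nrm_props(2)[OF assms] by (intro image_eqI[of _ _ 0]) auto
qed simp

lemma descent:
  fixes nrm :: "'a::euclidean_space \<Rightarrow> real"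
  assumes nr: "is_norm nrm" and sm: "L_smooth nrm f gf L"
  shows "f (y + s) \<le> f y + gf y \<bullet> s + L/2 * (nrm s)\<^sup>2"
proof -
  have L: "L > 0" and dv: "\<And>x. GDERIV f x :> gf x"
    and lp: "\<And>x z. dual_norm nrm (gf x - gf z) \<le> L * nrm (x - z)"
    using sm unfolding L_smooth_def by auto
  define \<phi> where "\<phi> t = f (y + t *\<^sub>R s) - t * (gf y \<bullet> s) - L/2 * t\<^sup>2 * (nrm s)\<^sup>2" for t
  define \<phi>' where "\<phi>' t = gf (y + t *\<^sub>R s) \<bullet> s - gf y \<bullet> s - L * t * (nrm s)\<^sup>2" for t
  have D: "(\<phi> has_real_derivative \<phi>' t) (at t)" for t
  proof -
    have l: "((\<lambda>t. y + t *\<^sub>R s) has_derivative (\<lambda>h. h *\<^sub>R s)) (at t)"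
      by (auto intro!: derivative_eq_intros)
    have g: "(f has_derivative (\<lambda>h. h \<bullet> gf (y + t *\<^sub>R s))) (at (y + t *\<^sub>R s))"
      using dv unfolding gderiv_def by blast
    have c: "((f \<circ> (\<lambda>t. y + t *\<^sub>R s)) has_derivative ((\<lambda>h. h \<bullet> gf (y + t *\<^sub>R s)) \<circ> (\<lambda>h. h *\<^sub>R s))) (at t)"
      by (rule diff_chain_at[OF l g])
    have c2: "((\<lambda>t. f (y + t *\<^sub>R s)) has_real_derivative (gf (y + t *\<^sub>R s) \<bullet> s)) (at t)"
      by (rule has_derivative_imp_has_field_derivative[OF c[unfolded o_def]]) (simp add: inner_commute)
    show ?thesis unfolding \<phi>_def[abs_def] \<phi>'_def
      by (rule derivative_eq_intros c2 refl | simp)+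
  qed
  obtain z where z: "0 < z" "z < 1" "\<phi> 1 - \<phi> 0 = (1 - 0) * \<phi>' z"
    using MVT2[of 0 1 \<phi> \<phi>'] D by auto
  have "gf (y + z *\<^sub>R s) \<bullet> s - gf y \<bullet> s = (gf (y + z *\<^sub>R s) - gf y) \<bullet> s"
    by (simp add: inner_diff_left)
  also have "\<dots> \<le> dual_norm nrm (gf (y + z *\<^sub>R s) - gf y) * nrm s" by (rule dual_ineq[OF nr])
  also have "\<dots> \<le> (L * nrm (z *\<^sub>R s)) * nrm s"
    using lp[of "y + z *\<^sub>R s" y] nrm_props(5)[OF nr, of s] by (intro mult_right_mono) auto
  also have "\<dots> = L * z * (nrm s)\<^sup>2" using nrm_props(3)[OF nr, of z s] z(1) by (simp add: power2_eq_square)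
  finally have "\<phi>' z \<le> 0" unfolding \<phi>'_def by simp
  then have "\<phi> 1 \<le> \<phi> 0" using z(3) by simp
  then show ?thesis unfolding \<phi>_def by simp
qed

theorem mainTheorem2:
  fixes nrm :: "'a::euclidean_space \<Rightarrow> real"
    and sharp :: "'a \<Rightarrow> 'a"
    and f d :: "'a \<Rightarrow> real" and gf gd :: "'a \<Rightarrow> 'a"
    and L :: real and N :: nat and x0 xstar :: 'a
    and x y v :: "nat \<Rightarrow> 'a" and A a \<beta> h :: "nat \<Rightarrow> real"
  assumes "is_norm nrm"
    and "\<forall>g. nrm (sharp g) \<le> 1 \<and> g \<bullet> sharp g = dual_norm nrm g"
    and "prox_function nrm d gd"
    and "L_smooth nrm f gf L"
    and "\<forall>z. f xstar \<le> f z"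
    and "N \<ge> 1"
    and "AGMsDR_common f gf d gd N x0 x y v A a \<beta>"
    and "AGMsDR_option_a nrm f gf L N x y A a \<or> AGMsDR_option_b nrm sharp f gf N x y A a h"
    and "\<forall>k\<le>N. gf (y k) \<noteq> 0"
  shows "(MIN k\<in>{0..N}. (dual_norm nrm (gf (y k)))\<^sup>2) \<le> 2 * L * (f x0 - f xstar) / real N"
proof -
  note nr = assms(1) and sm = assms(4)
  have L: "L > 0" using sm unfolding L_smooth_def by auto
  have sh1: "\<And>g. nrm (sharp g) \<le> 1" and sh2: "\<And>g. g \<bullet> sharp g = dual_norm nrm g"
    using assms(2) by auto
  let ?D = "\<lambda>k. dual_norm nrm (gf (y k))"
  have x00: "x 0 = x0" using assms(7) unfolding AGMsDR_common_def by auto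
  have yx: "f (y k) \<le> f (x k)" if "k \<le> N" for k
  proof -
    have yk: "y k = v k + \<beta> k *\<^sub>R (x k - v k)"
      and bb: "\<forall>b\<in>{0..1::real}. f (v k + \<beta> k *\<^sub>R (x k - v k)) \<le> f (v k + b *\<^sub>R (x k - v k))"
      using assms(7) that unfolding AGMsDR_common_def by auto
    from bb have "f (v k + \<beta> k *\<^sub>R (x k - v k)) \<le> f (v k + (1::real) *\<^sub>R (x k - v k))"
      by (rule bspec) simp
    then show ?thesis using yk by simp
  qed
  have zb: "f (y k) + gf (y k) \<bullet> (z - y k) + L/2 * (nrm (z - y k))\<^sup>2 \<le> f (y k) - (?D k)\<^sup>2 / (2*L)"
    if z: "z = y k - (?D k / L) *\<^sub>R sharp (gf (y k))" for k z
  proof -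
    let ?g = "gf (y k)" and ?s = "sharp (gf (y k))" and ?t = "?D k / L"
    have 1: "gf (y k) \<bullet> (z - y k) = - ?t * ?D k" using z sh2[of ?g] by (simp add: inner_minus_right)
    have "z - y k = - (?t *\<^sub>R ?s)" using z by simp
    then have "nrm (z - y k) = \<bar>?t\<bar> * nrm ?s" using nrm_props(1,3)[OF nr] by simp
    then have "(nrm (z - y k))\<^sup>2 = \<bar>?t\<bar>\<^sup>2 * (nrm ?s)\<^sup>2" by (simp only: power_mult_distrib)
    then have "(nrm (z - y k))\<^sup>2 = ?t\<^sup>2 * (nrm ?s)\<^sup>2" by (simp only: power2_abs)
    also have "\<dots> \<le> ?t\<^sup>2 * 1"
      using sh1[of ?g] nrm_props(5)[OF nr, of ?s] by (intro mult_left_mono) (auto simp: power_le_one)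
    finally have 2: "(nrm (z - y k))\<^sup>2 \<le> ?t\<^sup>2" by simp
    have "L/2 * (nrm (z - y k))\<^sup>2 \<le> L/2 * ?t\<^sup>2" using 2 L by (intro mult_left_mono) auto
    moreover have "L/2 * ?t\<^sup>2 = (?D k)\<^sup>2/(2*L)" "?t * ?D k = (?D k)\<^sup>2/L" using L by (auto simp: power2_eq_square field_simps)
    moreover have "(?D k)\<^sup>2/L = 2*((?D k)\<^sup>2/(2*L))" by simp
    ultimately show ?thesis using 1 by linarith
  qed
  have step: "f (x (Suc k)) \<le> f (y k) - (?D k)\<^sup>2 / (2*L)" if k: "k \<le> N" for k
    using assms(8)
  proof
    assume oa: "AGMsDR_option_a nrm f gf L N x y A a"
    let ?z = "y k - (?D k / L) *\<^sub>R sharp (gf (y k))"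
    have "f (x (Suc k)) \<le> f (y k) + gf (y k) \<bullet> (x (Suc k) - y k) + L/2 * (nrm (x (Suc k) - y k))\<^sup>2"
      using descent[OF nr sm, of "y k" "x (Suc k) - y k"] by simp
    also have "\<dots> \<le> f (y k) + gf (y k) \<bullet> (?z - y k) + L/2 * (nrm (?z - y k))\<^sup>2"
      using oa k unfolding AGMsDR_option_a_def by blast
    also have "\<dots> \<le> f (y k) - (?D k)\<^sup>2 / (2*L)" by (rule zb) simp
    finally show ?thesis .
  next
    assume ob: "AGMsDR_option_b nrm sharp f gf N x y A a h"
    let ?t = "?D k / L"
    let ?z = "y k - ?t *\<^sub>R sharp (gf (y k))"
    have t0: "?t \<ge> 0" using dual_nonneg[OF nr] L by simp
    have o1: "\<forall>t\<ge>0. f (y k - h (Suc k) *\<^sub>R sharp (gf (y k))) \<le> f (y k - t *\<^sub>R sharp (gf (y k)))"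
      and o2: "x (Suc k) = y k - h (Suc k) *\<^sub>R sharp (gf (y k))"
      using ob k unfolding AGMsDR_option_b_def by auto
    have "f (x (Suc k)) \<le> f ?z" unfolding o2 using o1 t0 by blast
    also have "\<dots> \<le> f (y k) + gf (y k) \<bullet> (?z - y k) + L/2 * (nrm (?z - y k))\<^sup>2"
      using descent[OF nr sm, of "y k" "?z - y k"] by simp
    also have "\<dots> \<le> f (y k) - (?D k)\<^sup>2 / (2*L)" by (rule zb) simp
    finally show ?thesis .
  qed
  have tel: "f (x n) \<le> f x0 - (\<Sum>k<n. (?D k)\<^sup>2) / (2*L)" if "n \<le> Suc N" for n
    using that
  proof (induction n)
    case 0 then show ?case using x00 by simp
  next
    case (Suc n)
    then have "n \<le> N" by simp
    have "f (x (Suc n)) \<le> f (x n) - (?D n)\<^sup>2 / (2*L)" using step[OF \<open>n \<le> N\<close>] yx[OF \<open>n \<le> N\<close>] by simp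
    also have "\<dots> \<le> f x0 - (\<Sum>k<n. (?D k)\<^sup>2) / (2*L) - (?D n)\<^sup>2 / (2*L)" using Suc by simp
    also have "\<dots> = f x0 - (\<Sum>k<Suc n. (?D k)\<^sup>2) / (2*L)" by (simp add: add_divide_distrib)
    finally show ?case .
  qed
  have "f xstar \<le> f (x (Suc N))" using assms(5) by blast
  with tel[of "Suc N"] have "(\<Sum>k<Suc N. (?D k)\<^sup>2) / (2*L) \<le> f x0 - f xstar" by simp
  then have S: "(\<Sum>k<Suc N. (?D k)\<^sup>2) \<le> 2 * L * (f x0 - f xstar)"
    using L by (simp add: divide_le_eq mult.commute)
  let ?M = "MIN k\<in>{0..N}. (?D k)\<^sup>2"
  have "\<And>k. k < Suc N \<Longrightarrow> ?M \<le> (?D k)\<^sup>2" by (rule Min_le) auto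
  then have "(\<Sum>k<Suc N. ?M) \<le> (\<Sum>k<Suc N. (?D k)\<^sup>2)" by (intro sum_mono) auto
  then have M1: "real (Suc N) * ?M \<le> 2 * L * (f x0 - f xstar)" using S by simp
  have M0: "?M \<ge> 0" by (subst Min_ge_iff) auto
  have N1: "real N \<ge> 1" using assms(6) by simp
  have "real N * ?M \<le> real (Suc N) * ?M" using M0 by (intro mult_right_mono) auto
  with M1 have "real N * ?M \<le> 2 * L * (f x0 - f xstar)" by linarith
  then show ?thesis using N1 by (simp add: field_simps)
qed

end
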